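(* Let $\epsilon\ge0$ and let $Q:\mathbb{R}\to\Delta(\mathbb{R})$ be a mechanism of the form $Qu=u+V$, where $V$ is a real random variable with distribution independent of $u$. If $Q$ is $\epsilon$-Lipschitz private with respect to the metric $|u-u'|$ on $\mathbb{R}$, then $V$ possesses a density (its distribution is absolutely continuous with respect to Lebesgue measure).
   Context: $\Delta(\mathbb{R})$ denotes the set of Borel probability measures on $\mathbb{R}$. A mechanism $Q:\mathbb{R}\to\Delta(\mathbb{R})$ is $\epsilon$-Lipschitz private if for all $u,u'\in\mathbb{R}$ and all Borel $\mathcal{S}\subseteq\mathbb{R}$, $|\ln\mathbb{P}(Qu\in\mathcal{S})-\ln\mathbb{P}(Qu'\in\mathcal{S})|\le\epsilon|u-u'|$, equivalently $\mathbb{P}(Qu\in\mathcal{S})\le e^{\epsilon|u-u'|}\mathbb{P}(Qu'\in\mathcal{S})$. *)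

theory Defs
  imports "HOL-Probability.Probability"
begin

definition lipschitz_private :: "real \<Rightarrow> (real \<Rightarrow> real measure) \<Rightarrow> bool" where
  "lipschitz_private \<epsilon> Q \<longleftrightarrow>
     (\<forall>u u' S. S \<in> sets borel \<longrightarrow>
        measure (Q u) S \<le> exp (\<epsilon> * \<bar>u - u'\<bar>) * measure (Q u') S)"

definition additive_mechanism :: "real measure \<Rightarrow> real \<Rightarrow> real measure" where
  "additive_mechanism D u = distr D borel (\<lambda>v. u + v)"

end

theory Submission
  imports Defs
begin

theorem lemma1:
  fixes \<epsilon> :: real and D :: "real measure"
  assumes "\<epsilon> \<ge> 0"
    and "prob_space D" and "sets D = sets borel"
    and "lipschitz_private \<epsilon> (additive_mechanism D)"
  shows "absolutely_continuous lborel D"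
  unfolding absolutely_continuous_def
proof
  fix S :: "real set" assume SN: "S \<in> null_sets lborel"
  have Sb: "S \<in> sets borel" using SN by auto
  interpret P: prob_space D by fact
  have mD: "measurable D = measurable borel" using assms(3) by (intro ext measurable_cong_sets) auto
  interpret PS: pair_sigma_finite lborel D
    by (simp add: pair_sigma_finite_def lborel.sigma_finite_measure_axioms P.sigma_finite_measure_axioms)
  have spD: "space D = UNIV" using sets_eq_imp_space_eq[OF assms(3)] by simp
  define A where "A = {p :: real \<times> real. fst p + snd p \<in> S}"
  have Aeq: "A = (\<lambda>p. fst p + snd p) -` S \<inter> space (lborel \<Otimes>\<^sub>M D)"
    by (auto simp: A_def space_pair_measure spD)
  have fm: "(\<lambda>p::real\<times>real. fst p + snd p) \<in> borel_measurable (lborel \<Otimes>\<^sub>M D)"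
    by (intro borel_measurable_add measurable_fst'' measurable_snd'') (auto simp: mD)
  have Am: "A \<in> sets (lborel \<Otimes>\<^sub>M D)"
    unfolding Aeq by (rule measurable_sets[OF fm Sb])
  have sec2: "emeasure lborel ((\<lambda>x. (x, y)) -` A) = 0" for y
  proof -
    have "(\<lambda>x. (x, y)) -` A = (+) y -` S \<inter> space lborel" by (auto simp: A_def add.commute)
    also have "emeasure lborel \<dots> = emeasure (distr lborel borel ((+) y)) S"
      using Sb by (subst emeasure_distr) auto
    also have "\<dots> = 0" using SN by (simp add: lborel_distr_plus null_setsD1)
    finally show ?thesis .
  qed
  have "emeasure (lborel \<Otimes>\<^sub>M D) A = 0"
    using PS.emeasure_pair_measure_alt2[OF Am] sec2 by simp
  then have "(\<integral>\<^sup>+x. emeasure D (Pair x -` A) \<partial>lborel) = 0"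
    using P.emeasure_pair_measure_alt[OF Am] by simp
  then have "AE x in lborel. emeasure D (Pair x -` A) = 0"
    using nn_integral_0_iff_AE[OF PS.measurable_emeasure_Pair1[OF Am]] by simp
  then obtain N where N: "{x \<in> space lborel. \<not> emeasure D (Pair x -` A) = 0} \<subseteq> N" "emeasure lborel N = 0"
    by (auto elim: AE_E)
  have "\<exists>u. emeasure D (Pair u -` A) = 0"
  proof (rule ccontr)
    assume "\<not> ?thesis"
    then have "UNIV \<subseteq> N" using N(1) by auto
    then have "emeasure lborel (UNIV::real set) = 0" using N(2)
      by (metis top.extremum_uniqueI)
    then show False by simp
  qed
  then obtain u where u: "emeasure D (Pair u -` A) = 0" by blast
  have mu: "measure (additive_mechanism D u) S = 0"
  proof -
    have "measure (additive_mechanism D u) S = measure D ((\<lambda>v. u + v) -` S \<inter> space D)"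
      unfolding additive_mechanism_def using Sb by (subst measure_distr) (auto simp: mD)
    also have "(\<lambda>v. u + v) -` S \<inter> space D = Pair u -` A"
      by (auto simp: A_def spD)
    finally show ?thesis using u by (simp add: measure_def)
  qed
  have m0: "measure (additive_mechanism D 0) S = measure D S"
  proof -
    have "measure (additive_mechanism D 0) S = measure D ((\<lambda>v. 0 + v) -` S \<inter> space D)"
      unfolding additive_mechanism_def using Sb by (subst measure_distr) (auto simp: mD)
    also have "(\<lambda>v. 0 + v) -` S \<inter> space D = S"
      by (simp add: spD)
    finally show ?thesis .
  qed
  have "measure D S \<le> exp (\<epsilon> * \<bar>0 - u\<bar>) * 0"
    using assms(4) Sb mu m0 unfolding lipschitz_private_def by metis
  then have "measure D S = 0" by (simp add: measure_nonneg antisym)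
  then have "emeasure D S = 0" using P.emeasure_eq_measure by simp
  then show "S \<in> null_sets D" using Sb assms(3) by auto
qed

end
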